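(* For all positive integers $n$: $|X_n|<\frac{C_1}{\lambda^{n/2}}$, $|Y_n|<\frac{C_1}{\lambda^{n/2}}$, $|Z_n|<\frac{2|\theta|}{\sqrt{3\theta^2-4p}}\cdot\frac{1}{\lambda^{n/2}}\le\frac{\sqrt2 C_1}{\lambda^{n/2}}$, and $|\lambda^n-(3\theta^2-p)c_n|<\frac{(1+\sqrt2)C_1}{\lambda^{n/2}}$.
   Context: Standing setup: $p,q\in\mathbb{Z}$ are such that $x^3-px-q$ is irreducible over $\mathbb{Q}$ with exactly one real root $\theta$ (one has $3\theta^2-4p>0$ and $3\theta^2-p>0$). $K=\mathbb{Q}(\theta)\subset\mathbb{R}$, $\mathcal{O}_K$ its ring of integers. $d$ is a positive integer with $\mathcal{O}_K\subseteq\frac1d\mathbb{Z}[\theta]$. $\lambda\in\mathcal{O}_K$ is a unit with $\lambda>1$. For $n\ge1$ the rationals $a_n,b_n,c_n$ are defined by $a_n+b_n\theta+c_n\theta^2=\lambda^n$, and $X_n=a_n+pc_n-b_n\theta$, $Y_n=a_n+pc_n-c_n\theta^2$, $Z_n=b_n\theta-c_n\theta^2$, $k_n=dc_n$. Constants: $C_1=\max\{\sqrt2,\ \frac{\sqrt2|\theta|}{\sqrt{3\theta^2-4p}}\}$, $C_2=\frac{\sqrt d}{\sqrt{3\theta^2-p}}$. *)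

theory Defs
  imports "HOL-Analysis.Analysis" "HOL-Computational_Algebra.Computational_Algebra"
begin

text \<open>The cubic number field K = Q(theta), for theta a real root of an irreducible cubic,
  written as the Q-span of 1, theta, theta^2 inside the reals.\<close>
definition cubic_field :: "real \<Rightarrow> real set" where
  "cubic_field \<theta> = {of_rat r0 + of_rat r1 * \<theta> + of_rat r2 * \<theta>^2 | r0 r1 r2. True}"

definition ring_of_integers :: "real set \<Rightarrow> real set" where
  "ring_of_integers K = {x \<in> K. algebraic_int x}"

definition is_unit_in :: "real set \<Rightarrow> real \<Rightarrow> bool" where
  "is_unit_in R x \<longleftrightarrow> x \<in> R \<and> x \<noteq> 0 \<and> inverse x \<in> R"

end

theory Submission
  imports Defs
begin


type_synonym trip = "rat \<times> rat \<times> rat"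

fun ev :: "real \<Rightarrow> trip \<Rightarrow> real" where
  "ev t (u,v,w) = of_rat u + of_rat v * t + of_rat w * t^2"

fun mulr :: "int \<Rightarrow> int \<Rightarrow> trip \<Rightarrow> trip \<Rightarrow> trip" where
  "mulr p q (a,b,c) (a',b',c') =
     (a*a' + of_int q*(b*c'+c*b'),
      a*b' + b*a' + of_int p*(b*c'+c*b') + of_int q*c*c',
      a*c' + b*b' + c*a' + of_int p*c*c')"

fun ReP :: "int \<Rightarrow> real \<Rightarrow> trip \<Rightarrow> real" where
  "ReP p t (u,v,w) = of_rat u - of_rat v * t / 2 + of_rat w * (of_int p - t^2/2)"

fun ImP :: "real \<Rightarrow> trip \<Rightarrow> real" where
  "ImP t (u,v,w) = (of_rat v - of_rat w * t) / 2"

definition MP :: "int \<Rightarrow> real \<Rightarrow> trip \<Rightarrow> real" where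
  "MP p t g = ReP p t g ^ 2 + (3*t^2 - 4* of_int p) * ImP t g ^ 2"

fun Dn :: "int \<Rightarrow> int \<Rightarrow> trip \<Rightarrow> rat" where
  "Dn p q (a,b,c) = a*((a+c* of_int p)*(a+c* of_int p) - (b* of_int p+c* of_int q)*b)
     - c* of_int q*(b*(a+c* of_int p) - (b* of_int p + c* of_int q)*c)
     + b* of_int q*(b*b - (a+c* of_int p)*c)"

fun rp :: "int \<Rightarrow> int \<Rightarrow> trip \<Rightarrow> nat \<Rightarrow> trip" where
  "rp p q g 0 = (1,0,0)"
| "rp p q g (Suc k) = mulr p q (rp p q g k) g"

lemma D_id:
  fixes A B C P T :: real
  shows "A*((A+C*P)*(A+C*P) - (B*P+C*(T^3-P*T))*B)
     - C*(T^3-P*T)*(B*(A+C*P) - (B*P + C*(T^3-P*T))*C)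
     + B*(T^3-P*T)*(B*B - (A+C*P)*C) = (A+B*T+C*T^2) * ((A - B*T/2 + C*(P - T^2/2))^2 + (3*T^2-4*P)*((B-C*T)/2)^2)"
  by (simp add: field_simps) algebra

lemma ev_id:
  fixes a b c a' b' c' p t :: real
  shows "(a*a' + (t^3-p*t)*(b*c'+c*b')) + (a*b' + b*a' + p*(b*c'+c*b') + (t^3-p*t)*c*c')*t + (a*c' + b*b' + c*a' + p*c*c')*t^2 = (a+b*t+c*t^2)*(a'+b'*t+c'*t^2)"
  by algebra

lemma ev_mul:
  fixes t :: real
  assumes "t^3 - of_int p * t - of_int q = 0"
  shows "ev t (mulr p q g h) = ev t g * ev t h"
proof -
  obtain a b c where g: "g = (a,b,c)" by (cases g) auto
  obtain a' b' c' where h: "h = (a',b',c')" by (cases h) auto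
  have q: "real_of_int q = t^3 - of_int p * t" using assms by simp
  show ?thesis unfolding g h
    using ev_id[where a="of_rat a" and a'="of_rat a'" and p="of_int p" and t=t and b="of_rat b" and c'="of_rat c'" and c="of_rat c" and b'="of_rat b'"]
    by (simp add: of_rat_add of_rat_mult q)
qed

lemma Re_mul:
  fixes t :: real
  assumes "t^3 - of_int p * t - of_int q = 0"
  shows "ReP p t (mulr p q g h) = ReP p t g * ReP p t h - (3*t^2 - 4* of_int p) * ImP t g * ImP t h"
proof -
  obtain a b c where g: "g = (a,b,c)" by (cases g) auto
  obtain a' b' c' where h: "h = (a',b',c')" by (cases h) auto
  have q: "t^3 = of_int p * t + of_int q" using assms by simp
  show ?thesis unfolding g h using q
    by (simp add: of_rat_add of_rat_mult) algebra
qed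

lemma Im_mul:
  fixes t :: real
  assumes "t^3 - of_int p * t - of_int q = 0"
  shows "ImP t (mulr p q g h) = ReP p t g * ImP t h + ImP t g * ReP p t h"
proof -
  obtain a b c where g: "g = (a,b,c)" by (cases g) auto
  obtain a' b' c' where h: "h = (a',b',c')" by (cases h) auto
  have q: "t^3 = of_int p * t + of_int q" using assms by simp
  show ?thesis unfolding g h using q
    by (simp add: of_rat_add of_rat_mult) algebra
qed

lemma M_mul:
  fixes t :: real
  assumes "t^3 - of_int p * t - of_int q = 0"
  shows "MP p t (mulr p q g h) = MP p t g * MP p t h"
  unfolding MP_def Re_mul[OF assms] Im_mul[OF assms]
  by algebra

lemma D_eq:
  fixes t :: real
  assumes "t^3 - of_int p * t - of_int q = 0"
  shows "of_rat (Dn p q g) = ev t g * MP p t g"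
proof -
  obtain a b c where g: "g = (a,b,c)" by (cases g) auto
  have q: "real_of_int q = t^3 - of_int p * t" using assms by simp
  show ?thesis unfolding g MP_def
    using D_id[where A="of_rat a" and C="of_rat c" and P="of_int p" and B="of_rat b" and T=t]
    by (simp add: of_rat_add of_rat_mult of_rat_diff q)
qed

lemma D_mul:
  fixes t :: real
  assumes "t^3 - of_int p * t - of_int q = 0"
  shows "Dn p q (mulr p q g h) = Dn p q g * Dn p q h"
proof -
  have "(of_rat (Dn p q (mulr p q g h)) :: real) = of_rat (Dn p q g * Dn p q h)"
    unfolding of_rat_mult D_eq[OF assms] ev_mul[OF assms] M_mul[OF assms] by simp
  then show ?thesis by simp
qed

lemma ev_rp:
  fixes t :: real
  assumes "t^3 - of_int p * t - of_int q = 0"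
  shows "ev t (rp p q g k) = ev t g ^ k"
  by (induction k) (simp_all add: ev_mul[OF assms])

lemma M_rp:
  fixes t :: real
  assumes "t^3 - of_int p * t - of_int q = 0"
  shows "MP p t (rp p q g k) = MP p t g ^ k"
  by (induction k) (simp_all add: M_mul[OF assms], simp add: MP_def)

lemma D_rp:
  fixes t :: real
  assumes "t^3 - of_int p * t - of_int q = 0"
  shows "Dn p q (rp p q g k) = Dn p q g ^ k"
  by (induction k) (simp_all add: D_mul[OF assms])



lemma no_factor:
  fixes \<beta> \<gamma> :: rat
  assumes irred: "irreducible ([:- of_int q, - of_int p, 0, 1:] :: rat poly)"
    and hp: "of_int p = \<beta>^2 - \<gamma>" and hq: "of_int q = \<beta> * \<gamma>"
  shows False
proof -
  have "([:- of_int q, - of_int p, 0, 1:] :: rat poly) = [:\<gamma>, \<beta>, 1:] * [:-\<beta>, 1:]"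
    by (simp add: hp hq power2_eq_square algebra_simps)
  from irreducibleD[OF irred this] have "[:\<gamma>, \<beta>, 1:] dvd 1 \<or> [:-\<beta>, 1:] dvd 1" .
  moreover have "\<not> [:\<gamma>, \<beta>, 1:] dvd 1" by (subst is_unit_iff_degree) auto
  moreover have "\<not> [:-\<beta>, 1:] dvd 1" by (subst is_unit_iff_degree) auto
  ultimately show False by blast
qed

lemma no_rat_root:
  fixes \<theta> :: real
  assumes irred: "irreducible ([:- of_int q, - of_int p, 0, 1:] :: rat poly)"
    and root: "\<theta>^3 - of_int p * \<theta> - of_int q = 0"
    and r: "\<theta> = of_rat r"
  shows False
proof -
  have "(of_rat (r^3 - of_int p * r - of_int q) :: real) = 0"
    using root r by (simp add: of_rat_diff of_rat_mult of_rat_power)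
  then have e: "r^3 - of_int p * r - of_int q = 0" by simp
  show False
    by (rule no_factor[OF irred, of r "r^2 - of_int p"]) (use e in \<open>auto simp: algebra_simps power2_eq_square power3_eq_cube\<close>)
qed

lemma lin_indep:
  fixes \<theta> :: real and u v w :: rat
  assumes irred: "irreducible ([:- of_int q, - of_int p, 0, 1:] :: rat poly)"
    and root: "\<theta>^3 - of_int p * \<theta> - of_int q = 0"
    and z: "of_rat u + of_rat v * \<theta> + of_rat w * \<theta>^2 = 0"
  shows "u = 0 \<and> v = 0 \<and> w = 0"
proof (cases "w = 0")
  case False
  define \<beta> where "\<beta> = v / w"
  define \<gamma> where "\<gamma> = u / w"
  have sq: "\<theta>^2 = - (of_rat \<beta> * \<theta> + of_rat \<gamma>)"
    using z False unfolding \<beta>_def \<gamma>_def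
    by (simp add: of_rat_divide field_simps)
  have cube: "\<theta>^3 = \<theta> * \<theta>^2" by (simp add: power2_eq_square power3_eq_cube)
  have c1: "\<theta>^3 = -(of_rat \<beta> * \<theta>^2 + of_rat \<gamma> * \<theta>)"
  proof -
    have "\<theta>^3 = \<theta> * (-(of_rat \<beta> * \<theta> + of_rat \<gamma>))" using cube sq by simp
    then show ?thesis by (simp add: algebra_simps power2_eq_square)
  qed
  have c2: "\<theta>^3 = of_rat \<beta> * (of_rat \<beta> * \<theta> + of_rat \<gamma>) - of_rat \<gamma> * \<theta>"
  proof -
    have "\<theta>^3 = -(of_rat \<beta> * (-(of_rat \<beta> * \<theta> + of_rat \<gamma>)) + of_rat \<gamma> * \<theta>)"
      using c1 by (simp only: sq)
    then show ?thesis by (simp add: algebra_simps)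
  qed
  have key: "(of_rat (\<beta>^2 - \<gamma> - of_int p)) * \<theta> = (of_rat (of_int q - \<beta> * \<gamma>) :: real)"
    using root unfolding c2
    by (simp add: of_rat_diff of_rat_add of_rat_mult of_rat_power algebra_simps power2_eq_square)
  show ?thesis
  proof (cases "\<beta>^2 - \<gamma> - of_int p = 0")
    case True
    then have "(of_rat (of_int q - \<beta> * \<gamma>) :: real) = 0" using key by simp
    then have "of_int q = \<beta> * \<gamma>" by simp
    moreover have "of_int p = \<beta>^2 - \<gamma>" using True by simp
    ultimately show ?thesis using no_factor[OF irred] by blast
  next
    case nz: False
    have "\<theta> = of_rat ((of_int q - \<beta> * \<gamma>) / (\<beta>^2 - \<gamma> - of_int p))"
      using key nz by (simp add: of_rat_divide field_simps)
    then show ?thesis using no_rat_root[OF irred root] by blast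
  qed
next
  case w: True
  show ?thesis
  proof (cases "v = 0")
    case False
    have "\<theta> = of_rat (- u / v)" using z w False by (simp add: of_rat_divide of_rat_minus field_simps)
    then show ?thesis using no_rat_root[OF irred root] by blast
  next
    case True
    then show ?thesis using z w by simp
  qed
qed

lemma ev_inj:
  fixes \<theta> :: real
  assumes irred: "irreducible ([:- of_int q, - of_int p, 0, 1:] :: rat poly)"
    and root: "\<theta>^3 - of_int p * \<theta> - of_int q = 0"
    and e: "ev \<theta> g = ev \<theta> h"
  shows "g = h"
proof -
  obtain a b c where g: "g = (a,b,c)" by (cases g) auto
  obtain a' b' c' where h: "h = (a',b',c')" by (cases h) auto
  have "of_rat (a - a') + of_rat (b - b') * \<theta> + of_rat (c - c') * \<theta>^2 = 0"
    using e unfolding g h by (simp add: of_rat_diff algebra_simps)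
  from lin_indep[OF irred root this] show ?thesis unfolding g h by simp
qed

lemma theta_nz:
  fixes \<theta> :: real
  assumes irred: "irreducible ([:- of_int q, - of_int p, 0, 1:] :: rat poly)"
    and root: "\<theta>^3 - of_int p * \<theta> - of_int q = 0"
  shows "\<theta> \<noteq> 0"
  using no_rat_root[OF irred root, of 0] by auto

lemma s2_pos:
  fixes \<theta> :: real
  assumes irred: "irreducible ([:- of_int q, - of_int p, 0, 1:] :: rat poly)"
    and root: "\<theta>^3 - of_int p * \<theta> - of_int q = 0"
    and uniq: "\<forall>x::real. x^3 - of_int p * x - of_int q = 0 \<longrightarrow> x = \<theta>"
  shows "3 * \<theta>^2 - 4 * of_int p > 0"
proof (rule ccontr)
  assume "\<not> ?thesis"
  then have D: "4 * of_int p - 3 * \<theta>^2 \<ge> 0" by simp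
  define \<sigma> where "\<sigma> = sqrt (4 * of_int p - 3 * \<theta>^2)"
  have s2: "\<sigma>^2 = 4 * of_int p - 3 * \<theta>^2" unfolding \<sigma>_def using D by simp
  have rt: "x^3 - of_int p * x - of_int q = 0" if "x = (-\<theta> + e * \<sigma>)/2" "e^2 = 1" for x e
  proof -
    have "x^2 + \<theta> * x + \<theta>^2 - of_int p = 0"
      unfolding that(1) using s2 that(2) by (simp add: field_simps power2_eq_square)
    moreover have "x^3 - of_int p * x - of_int q = (x - \<theta>) * (x^2 + \<theta> * x + \<theta>^2 - of_int p) + (\<theta>^3 - of_int p * \<theta> - of_int q)"
      by (simp add: algebra_simps power2_eq_square power3_eq_cube)
    ultimately show ?thesis using root by simp
  qed
  have "(-\<theta> + 1 * \<sigma>)/2 = \<theta>" by (rule uniq[rule_format], rule rt[OF refl]) simp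
  moreover have "(-\<theta> + (-1) * \<sigma>)/2 = \<theta>" by (rule uniq[rule_format], rule rt[OF refl]) simp
  ultimately have "\<theta> = 0" by simp
  then show False using theta_nz[OF irred root] by simp
qed

lemma t_ne1:
  fixes \<theta> :: real
  assumes irred: "irreducible ([:- of_int q, - of_int p, 0, 1:] :: rat poly)"
    and root: "\<theta>^3 - of_int p * \<theta> - of_int q = 0"
  shows "\<theta>^2 \<noteq> 3 * \<theta>^2 - 4 * of_int p"
proof
  assume h: "\<theta>^2 = 3 * \<theta>^2 - 4 * of_int p"
  then have h2: "\<theta>^2 = 2 * of_int p" by simp
  have "\<theta>^3 = \<theta> * \<theta>^2" by (simp add: power2_eq_square power3_eq_cube)
  then have "of_int p * \<theta> = of_int q" using root h2 by (simp add: algebra_simps)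
  moreover have "p \<noteq> 0" using h2 theta_nz[OF irred root] by auto
  ultimately have "\<theta> = of_rat (of_int q / of_int p)" by (simp add: of_rat_divide field_simps)
  then show False using no_rat_root[OF irred root] by blast
qed



definition Lat :: "real \<Rightarrow> nat \<Rightarrow> real \<Rightarrow> bool" where
  "Lat t E y \<longleftrightarrow> (\<exists>u v w :: int. y = (of_int u + of_int v * t + of_int w * t^2) / real E)"

lemma Lat_mult:
  fixes t :: real
  assumes root: "t^3 - of_int p * t - of_int q = 0"
    and "Lat t E1 y" "Lat t E2 z"
  shows "Lat t (E1 * E2) (y * z)"
proof -
  obtain a b c where y: "y = (of_int a + of_int b * t + of_int c * t^2) / real E1"
    using assms(2) unfolding Lat_def by blast
  obtain a' b' c' where z: "z = (of_int a' + of_int b' * t + of_int c' * t^2) / real E2"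
    using assms(3) unfolding Lat_def by blast
  have q: "real_of_int q = t^3 - of_int p * t" using root by simp
  have "y * z = (of_int (a*a' + q*(b*c'+c*b')) + of_int (a*b' + b*a' + p*(b*c'+c*b') + q*c*c') * t
        + of_int (a*c' + b*b' + c*a' + p*c*c') * t^2) / real (E1 * E2)"
    unfolding y z using ev_id[where a="of_int a" and a'="of_int a'" and p="of_int p" and t=t and b="of_int b" and c'="of_int c'" and c="of_int c" and b'="of_int b'"]
    by (simp add: q)
  then show ?thesis unfolding Lat_def by blast
qed

lemma Lat_scale:
  assumes "Lat t E y" "k > 0"
  shows "Lat t (E * k) y"
proof -
  obtain a b c where y: "y = (of_int a + of_int b * t + of_int c * t^2) / real E"
    using assms(1) unfolding Lat_def by blast
  have "y = (of_int (int k * a) + of_int (int k * b) * t + of_int (int k * c) * t^2) / real (E * k)"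
    unfolding y using assms(2) by (cases "E = 0") (simp_all add: field_simps)
  then show ?thesis unfolding Lat_def by blast
qed

lemma Lat_add:
  assumes "Lat t E y" "Lat t E z"
  shows "Lat t E (y + z)"
proof -
  obtain a b c where y: "y = (of_int a + of_int b * t + of_int c * t^2) / real E"
    using assms(1) unfolding Lat_def by blast
  obtain a' b' c' where z: "z = (of_int a' + of_int b' * t + of_int c' * t^2) / real E"
    using assms(2) unfolding Lat_def by blast
  have "y + z = (of_int (a+a') + of_int (b+b') * t + of_int (c+c') * t^2) / real E"
    unfolding y z by (simp add: add_divide_distrib algebra_simps)
  then show ?thesis unfolding Lat_def by blast
qed

lemma Lat_intmul:
  assumes "Lat t E y" "e \<in> \<int>"
  shows "Lat t E (e * y)"
proof -
  obtain a b c where y: "y = (of_int a + of_int b * t + of_int c * t^2) / real E"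
    using assms(1) unfolding Lat_def by blast
  obtain k where e: "e = of_int k" using assms(2) by (auto elim: Ints_cases)
  have "e * y = (of_int (k*a) + of_int (k*b) * t + of_int (k*c) * t^2) / real E"
    unfolding y e by (simp add: algebra_simps)
  then show ?thesis unfolding Lat_def by blast
qed

lemma Lat_zero: "Lat t E 0"
  unfolding Lat_def by (rule exI[of _ 0])+ simp

lemma Lat_one: "Lat t 1 1"
  unfolding Lat_def by (rule exI[of _ 1], rule exI[of _ 0], rule exI[of _ 0]) simp

lemma Lat_sum:
  fixes m :: nat
  assumes "\<And>j. j < m \<Longrightarrow> Lat t E (f j)"
  shows "Lat t E (\<Sum>j<m. f j)"
  using assms by (induction m) (auto intro: Lat_add Lat_zero)

lemma Lat_pow:
  fixes t :: real
  assumes root: "t^3 - of_int p * t - of_int q = 0" and "Lat t d x"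
  shows "Lat t (d^j) (x^j)"
proof (induction j)
  case 0
  then show ?case using Lat_one by simp
next
  case (Suc j)
  have "Lat t (d^j * d) (x^j * x)" by (rule Lat_mult[OF root Suc assms(2)])
  then show ?case by (simp add: mult.commute)
qed

lemma alg_powers:
  fixes t x :: real
  assumes root: "t^3 - of_int p * t - of_int q = 0"
    and alg: "algebraic_int x" and L: "Lat t d x" and d: "d > 0"
  shows "\<exists>E>0. \<forall>k. Lat t E (x^k)"
proof -
  from alg obtain P where P1: "lead_coeff P = 1" and P2: "\<forall>i. coeff P i \<in> \<int>" and P3: "poly P x = 0"
    by (auto elim: algebraic_int.cases)
  define m where "m = degree P"
  have "m \<noteq> 0"
  proof
    assume "m = 0"
    then have "poly P x = 1" using P1 unfolding m_def by (simp add: poly_altdef)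
    then show False using P3 by simp
  qed
  then obtain m' where m': "m = Suc m'" by (cases m) auto
  have "poly P x = (\<Sum>i<m. coeff P i * x^i) + x^m"
    unfolding poly_altdef m_def[symmetric] using P1 m_def
    by (simp add: lessThan_Suc_atMost[symmetric] m')
  then have xm: "x^m = - (\<Sum>i<m. coeff P i * x^i)" using P3 by simp
  have claim: "\<exists>e. (\<forall>j. e j \<in> \<int>) \<and> x^k = (\<Sum>j<m. e j * x^j)" for k
  proof (induction k)
    case 0
    have "(\<Sum>j<m. (if j = 0 then 1 else 0) * x^j) = (\<Sum>j<m. if j = 0 then x^j else 0)"
      by (rule sum.cong) auto
    also have "\<dots> = 1" using \<open>m \<noteq> 0\<close> by (simp add: sum.delta')
    finally show ?case
      by (intro exI[of _ "\<lambda>j. if j = 0 then 1 else 0"]) auto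
  next
    case (Suc k)
    then obtain e where e1: "\<forall>j. e j \<in> \<int>" and e2: "x^k = (\<Sum>j<m. e j * x^j)" by blast
    define e' where "e' j = (if j = 0 then 0 else e (j - 1)) - e m' * coeff P j" for j
    have "x^Suc k = (\<Sum>j<m. e j * x^Suc j)"
      by (simp add: e2 sum_distrib_left algebra_simps)
    also have "\<dots> = (\<Sum>j<m'. e j * x^Suc j) + e m' * x^m"
      by (simp add: m')
    also have "\<dots> = (\<Sum>j<m. e' j * x^j)"
    proof -
      have s1: "(\<Sum>j<m. (if j = 0 then 0 else e (j - 1)) * x^j) = (\<Sum>j<m'. e j * x^Suc j)"
        unfolding m' sum.lessThan_Suc_shift by simp
      have "(\<Sum>j<m. e' j * x^j) = (\<Sum>j<m. (if j = 0 then 0 else e (j - 1)) * x^j) - e m' * (\<Sum>j<m. coeff P j * x^j)"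
        unfolding e'_def by (simp add: sum_subtractf left_diff_distrib sum_distrib_left mult.assoc)
      then show ?thesis unfolding s1 xm by simp
    qed
    finally have "x^Suc k = (\<Sum>j<m. e' j * x^j)" .
    moreover have "\<forall>j. e' j \<in> \<int>" using e1 P2 unfolding e'_def by auto
    ultimately show ?case by blast
  qed
  have Lj: "Lat t (d^m) (x^j)" if "j < m" for j
  proof -
    have "Lat t (d^j * d^(m-j)) (x^j)" using Lat_scale[OF Lat_pow[OF root L, of j]] d by simp
    moreover have "d^j * d^(m-j) = d^m" using that by (simp add: power_add[symmetric])
    ultimately show ?thesis by simp
  qed
  show ?thesis
  proof (intro exI conjI allI)
    show "d^m > 0" using d by simp
    fix k
    obtain e where e1: "\<forall>j. e j \<in> \<int>" and e2: "x^k = (\<Sum>j<m. e j * x^j)" using claim by blast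
    show "Lat t (d^m) (x^k)" unfolding e2 by (rule Lat_sum) (use e1 Lj Lat_intmul in blast)
  qed
qed

lemma bounded_den:
  fixes r :: rat
  assumes M: "M > 0" and h: "\<forall>k. r^k * of_nat M \<in> \<int>"
  shows "r \<in> \<int>"
proof -
  obtain n m where qo: "quotient_of r = (n, m)" by (cases "quotient_of r")
  have m0: "m > 0" using quotient_of_denom_pos[OF qo] .
  have cop: "coprime n m" using quotient_of_coprime[OF qo] .
  have r: "r = of_int n / of_int m" using quotient_of_div[OF qo] .
  have dv: "m^k dvd int M" for k
  proof -
    obtain z where z: "r^k * of_nat M = of_int z" using h by (meson Ints_cases)
    have "of_int (n^k * int M) = (of_int (z * m^k) :: rat)"
      using z m0 unfolding r by (simp add: power_divide field_simps)
    then have "n^k * int M = z * m^k" by (simp only: of_int_eq_iff)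
    then have "m^k dvd n^k * int M" by (metis dvd_triv_right)
    moreover have "coprime (m^k) (n^k)" using cop by (simp add: coprime_commute)
    ultimately show ?thesis using coprime_dvd_mult_right_iff by blast
  qed
  have "m = 1"
  proof (rule ccontr)
    assume "m \<noteq> 1"
    then have m2: "m \<ge> 2" using m0 by simp
    have "m^M \<le> int M" using dv[of M] M by (simp add: zdvd_imp_le)
    moreover have "(2::int)^M \<le> m^M" using m2 by (simp add: power_mono)
    moreover have "int M < 2^M" using less_exp[of M] by (metis of_nat_less_iff of_nat_numeral of_nat_power)
    ultimately show False by simp
  qed
  then show ?thesis unfolding r by simp
qed

fun DnI :: "int \<Rightarrow> int \<Rightarrow> int \<Rightarrow> int \<Rightarrow> int \<Rightarrow> int" where
  "DnI p q a b c = a*((a+c*p)*(a+c*p) - (b*p+c*q)*b)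
     - c*q*(b*(a+c*p) - (b*p + c*q)*c)
     + b*q*(b*b - (a+c*p)*c)"

lemma Dn_hom: "Dn p q (e*x, e*y, e*z) = e^3 * Dn p q (x, y, z)"
  by (simp add: power3_eq_cube) algebra

lemma Dn_int: "Dn p q (of_int u, of_int v, of_int w) = of_int (DnI p q u v w)"
  by simp

lemma Dn_scaled:
  assumes "E > 0"
  shows "Dn p q (of_int u / of_nat E, of_int v / of_nat E, of_int w / of_nat E) = of_int (DnI p q u v w) / of_nat E ^ 3"
proof -
  have e: "of_nat E * (of_int z / of_nat E) = (of_int z :: rat)" for z using assms by simp
  have "of_nat E ^ 3 * Dn p q (of_int u / of_nat E, of_int v / of_nat E, of_int w / of_nat E) = of_int (DnI p q u v w)"
    unfolding Dn_hom[symmetric] e Dn_int ..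
  then show ?thesis using assms by (simp add: field_simps)
qed

lemma norm_int:
  fixes \<theta> y :: real
  assumes irred: "irreducible ([:- of_int q, - of_int p, 0, 1:] :: rat poly)"
    and root: "\<theta>^3 - of_int p * \<theta> - of_int q = 0"
    and y: "y = ev \<theta> g" and alg: "algebraic_int y" and L: "Lat \<theta> d y" and d: "d > 0"
  shows "Dn p q g \<in> \<int>"
proof -
  obtain E where E: "E > 0" "\<And>k. Lat \<theta> E (y^k)" using alg_powers[OF root alg L d] by blast
  have "(Dn p q g)^k * of_nat (E^3) \<in> \<int>" for k
  proof -
    obtain u v w where uvw: "y^k = (of_int u + of_int v * \<theta> + of_int w * \<theta>^2) / real E"
      using E(2)[of k] unfolding Lat_def by blast
    have "ev \<theta> (rp p q g k) = ev \<theta> (of_int u / of_nat E, of_int v / of_nat E, of_int w / of_nat E)"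
      unfolding ev_rp[OF root] y[symmetric] uvw by (simp add: of_rat_divide add_divide_distrib)
    then have "rp p q g k = (of_int u / of_nat E, of_int v / of_nat E, of_int w / of_nat E)"
      by (rule ev_inj[OF irred root])
    then have "(Dn p q g)^k = of_int (DnI p q u v w) / of_nat E ^ 3"
      using D_rp[OF root] Dn_scaled[OF E(1)] by metis
    moreover have "(of_nat E ^ 3 :: rat) \<noteq> 0" using E(1) by simp
    ultimately have "(Dn p q g)^k * of_nat (E^3) = of_int (DnI p q u v w)"
      by (simp only: of_nat_power) (simp add: field_simps)
    then show ?thesis by (simp only: Ints_of_int)
  qed
  then have "\<forall>k. (Dn p q g)^k * of_nat (E^3) \<in> \<int>" by blast
  moreover have "E^3 > 0" using E(1) by simp
  ultimately show ?thesis using bounded_den by blast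
qed



lemma final_ineq:
  fixes R I \<theta> s2 \<rho> :: real
  assumes s2: "s2 > 0" and th: "\<theta> \<noteq> 0" and tne: "\<theta>^2 \<noteq> s2" and rho: "\<rho> > 0"
    and RI: "R^2 + s2 * I^2 = \<rho>^2" and R0: "R \<noteq> 0"
  defines "C1 \<equiv> max (sqrt 2) (sqrt 2 * \<bar>\<theta>\<bar> / sqrt s2)"
  shows "\<bar>R - \<theta>*I\<bar> < C1 * \<rho> \<and> \<bar>R + \<theta>*I\<bar> < C1 * \<rho> \<and> \<bar>2*\<theta>*I\<bar> < 2*\<bar>\<theta>\<bar>/sqrt s2 * \<rho>
     \<and> 2*\<bar>\<theta>\<bar>/sqrt s2 * \<rho> \<le> sqrt 2 * C1 * \<rho> \<and> \<bar>R + 3*\<theta>*I\<bar> < (1 + sqrt 2) * C1 * \<rho>"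
proof -
  define s where "s = sqrt s2"
  have s: "s > 0" "s^2 = s2" unfolding s_def using s2 by auto
  have CS: "s2 * (R + k*I)^2 \<le> (s2 + k^2) * \<rho>^2" for k
  proof -
    have "(s2 + k^2) * \<rho>^2 - s2 * (R + k*I)^2 = (k*R - s2*I)^2"
      unfolding RI[symmetric] by (simp add: power2_eq_square algebra_simps)
    then show ?thesis by (metis diff_ge_0_iff_ge zero_le_power2)
  qed
  have C1a: "C1 \<ge> sqrt 2" unfolding C1_def by simp
  have C1b: "C1 \<ge> sqrt 2 * \<bar>\<theta>\<bar> / s" unfolding C1_def s_def by simp
  have C1pos: "C1 > 0" using C1a by (meson less_le_trans real_sqrt_gt_0_iff zero_less_numeral)
  have F1: "C1^2 \<ge> 2" using power_mono[OF C1a, of 2] by simp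
  have "C1^2 \<ge> (sqrt 2 * \<bar>\<theta>\<bar> / s)^2" using power_mono[OF C1b, of 2] s by simp
  then have F1b: "C1^2 \<ge> 2 * \<theta>^2 / s2" using s by (simp add: power_divide power_mult_distrib)
  then have F1c: "C1^2 * s2 \<ge> 2 * \<theta>^2" using s2 by (simp add: field_simps)
  have F1d: "C1^2 * s2 \<ge> 2 * s2" using F1 s2 by simp
  have F2: "C1^2 * s2 > s2 + \<theta>^2"
  proof (cases "\<theta>^2 < s2")
    case True then show ?thesis using F1d by linarith
  next
    case False then have "\<theta>^2 > s2" using tne by linarith
    then show ?thesis using F1c by linarith
  qed
  have sq_bound: "\<bar>x\<bar> < C * \<rho>" if "s2 * x^2 \<le> (s2 + k) * \<rho>^2" "s2 + k < C^2 * s2" "C > 0" for x k C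
  proof -
    have "s2 * x^2 < s2 * (C * \<rho>)^2"
      using that(1) mult_strict_right_mono[OF that(2), of "\<rho>^2"] rho by (simp add: power_mult_distrib algebra_simps)
    then have "\<bar>x\<bar>^2 < (C * \<rho>)^2" using s2 by simp
    then show ?thesis by (rule power_less_imp_less_base) (use that rho in simp)
  qed
  have X: "\<bar>R - \<theta>*I\<bar> < C1 * \<rho>"
    using sq_bound[OF _ F2 C1pos] CS[of "-\<theta>"] by simp
  have Y: "\<bar>R + \<theta>*I\<bar> < C1 * \<rho>"
    using sq_bound[OF _ F2 C1pos] CS[of "\<theta>"] by simp
  have "s2 + (3*\<theta>)^2 < ((1 + sqrt 2) * C1)^2 * s2"
  proof -
    have "s2 + (3*\<theta>)^2 \<le> 5 * (C1^2 * s2)" using F1c F1d by (simp add: power_mult_distrib)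
    also have "\<dots> < (1 + sqrt 2)^2 * (C1^2 * s2)"
    proof -
      have "(1 + sqrt 2)^2 = 3 + 2 * sqrt 2" by (simp add: power2_eq_square algebra_simps)
      moreover have "sqrt 2 > 1" by simp
      ultimately have "(1 + sqrt 2)^2 > 5" by simp
      moreover have "C1^2 * s2 > 0" using C1pos s2 by simp
      ultimately show ?thesis by (rule mult_strict_right_mono)
    qed
    also have "\<dots> = ((1 + sqrt 2) * C1)^2 * s2" by (simp add: power_mult_distrib)
    finally show ?thesis .
  qed
  then have L: "\<bar>R + 3*\<theta>*I\<bar> < (1 + sqrt 2) * C1 * \<rho>"
    using sq_bound[OF CS[of "3*\<theta>"], of "(1 + sqrt 2) * C1"] C1pos
    by (simp add: algebra_simps add_pos_pos)
  have Z: "\<bar>2*\<theta>*I\<bar> < 2*\<bar>\<theta>\<bar>/sqrt s2 * \<rho>"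
  proof -
    have r2: "R^2 > 0" using R0 by simp
    have "s2 * I^2 < \<rho>^2" using RI r2 by linarith
    then have "(s * \<bar>I\<bar>)^2 < \<rho>^2" using s by (simp add: power_mult_distrib)
    then have "s * \<bar>I\<bar> < \<rho>" by (rule power_less_imp_less_base) (use rho in simp)
    then have "\<bar>I\<bar> < \<rho> / s" using s by (simp add: field_simps)
    moreover have "2*\<bar>\<theta>\<bar> > 0" using th by simp
    ultimately have "2*\<bar>\<theta>\<bar> * \<bar>I\<bar> < 2*\<bar>\<theta>\<bar> * (\<rho> / s)" by (rule mult_strict_left_mono)
    then show ?thesis unfolding s_def by (simp add: abs_mult)
  qed
  have W: "2*\<bar>\<theta>\<bar>/sqrt s2 * \<rho> \<le> sqrt 2 * C1 * \<rho>"
  proof -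
    have "sqrt 2 * (sqrt 2 * \<bar>\<theta>\<bar> / s) = 2*\<bar>\<theta>\<bar>/s" by simp
    then have "2*\<bar>\<theta>\<bar>/s \<le> sqrt 2 * C1" using C1b
      by (metis mult_left_mono real_sqrt_ge_zero zero_le_numeral)
    then show ?thesis unfolding s_def using rho by (metis mult_right_mono less_imp_le)
  qed
  show ?thesis using X Y Z W L by blast
qed

theorem mainTheorem7:
  fixes p q :: int and \<theta> lam :: real and d :: nat and a b c :: "nat \<Rightarrow> rat"
  assumes irred: "irreducible ([:- of_int q, - of_int p, 0, 1:] :: rat poly)"
    and root: "\<theta>^3 - of_int p * \<theta> - of_int q = 0"
    and unique_real_root: "\<forall>x::real. x^3 - of_int p * x - of_int q = 0 \<longrightarrow> x = \<theta>"
    and d_pos: "d > 0"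
    and d_bound: "\<forall>x \<in> ring_of_integers (cubic_field \<theta>).
                    \<exists>u v w :: int. x = (of_int u + of_int v * \<theta> + of_int w * \<theta>^2) / real d"
    and unit: "is_unit_in (ring_of_integers (cubic_field \<theta>)) lam"
    and gt1: "lam > 1"
    and abc: "\<forall>n\<ge>1. of_rat (a n) + of_rat (b n) * \<theta> + of_rat (c n) * \<theta>^2 = lam^n"
  shows "\<forall>n\<ge>1.
    (let C1 = max (sqrt 2) (sqrt 2 * \<bar>\<theta>\<bar> / sqrt (3 * \<theta>^2 - 4 * of_int p));
         X = of_rat (a n) + of_int p * of_rat (c n) - of_rat (b n) * \<theta>;
         Y = of_rat (a n) + of_int p * of_rat (c n) - of_rat (c n) * \<theta>^2;
         Z = of_rat (b n) * \<theta> - of_rat (c n) * \<theta>^2;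
         h = lam powr (real n / 2)
     in \<bar>X\<bar> < C1 / h \<and> \<bar>Y\<bar> < C1 / h
        \<and> \<bar>Z\<bar> < 2 * \<bar>\<theta>\<bar> / sqrt (3 * \<theta>^2 - 4 * of_int p) * (1 / h)
        \<and> 2 * \<bar>\<theta>\<bar> / sqrt (3 * \<theta>^2 - 4 * of_int p) * (1 / h) \<le> sqrt 2 * C1 / h
        \<and> \<bar>lam^n - (3 * \<theta>^2 - of_int p) * of_rat (c n)\<bar> < (1 + sqrt 2) * C1 / h)"
proof (intro allI impI)
  fix n :: nat assume n1: "n \<ge> 1"
  define s2 where "s2 = 3 * \<theta>^2 - 4 * of_int p"
  have s2pos: "s2 > 0" using s2_pos[OF irred root unique_real_root] unfolding s2_def .
  have th0: "\<theta> \<noteq> 0" using theta_nz[OF irred root] .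
  have tne: "\<theta>^2 \<noteq> s2" using t_ne1[OF irred root] unfolding s2_def .
  define gl where "gl = (a 1, b 1, c 1)"
  have evl: "ev \<theta> gl = lam" using abc unfolding gl_def by auto
  have lamO: "lam \<in> ring_of_integers (cubic_field \<theta>)" and invO: "inverse lam \<in> ring_of_integers (cubic_field \<theta>)"
    using unit unfolding is_unit_in_def by auto
  have Lat_of: "Lat \<theta> d x" if "x \<in> ring_of_integers (cubic_field \<theta>)" for x
    using d_bound that unfolding Lat_def by blast
  have alg: "algebraic_int x" if "x \<in> ring_of_integers (cubic_field \<theta>)" for x
    using that unfolding ring_of_integers_def by auto
  obtain gm where evm: "ev \<theta> gm = inverse lam"
  proof -
    from invO obtain r0 r1 r2 where "inverse lam = of_rat r0 + of_rat r1 * \<theta> + of_rat r2 * \<theta>^2"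
      unfolding ring_of_integers_def cubic_field_def by auto
    then have "ev \<theta> (r0, r1, r2) = inverse lam" by simp
    then show ?thesis using that by blast
  qed
  have Dl: "Dn p q gl \<in> \<int>"
    by (rule norm_int[OF irred root evl[symmetric] alg[OF lamO] Lat_of[OF lamO] d_pos])
  have Dm: "Dn p q gm \<in> \<int>"
    by (rule norm_int[OF irred root evm[symmetric] alg[OF invO] Lat_of[OF invO] d_pos])
  have "ev \<theta> (mulr p q gl gm) = ev \<theta> (1, 0, 0)"
    using gt1 by (simp add: ev_mul[OF root] evl evm del: ev.simps) simp
  then have "mulr p q gl gm = (1, 0, 0)" by (rule ev_inj[OF irred root])
  then have DD: "Dn p q gl * Dn p q gm = 1" using D_mul[OF root, of gl gm] by simp
  have MPnn: "MP p \<theta> g \<ge> 0" for g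
    unfolding MP_def using s2pos unfolding s2_def by simp
  have "(of_rat (Dn p q gl) :: real) \<ge> 0" unfolding D_eq[OF root] evl using gt1 MPnn[of gl] by simp
  then have Dlnn: "Dn p q gl \<ge> 0" by simp
  have Dl1: "Dn p q gl = 1"
  proof -
    obtain z1 where z1: "Dn p q gl = of_int z1" using Dl by (auto elim: Ints_cases)
    obtain z2 where z2: "Dn p q gm = of_int z2" using Dm by (auto elim: Ints_cases)
    have "z1 * z2 = 1" using DD unfolding z1 z2 by (metis of_int_eq_1_iff of_int_mult)
    moreover have "z1 \<ge> 0" using Dlnn z1 by simp
    ultimately have "z1 = 1" using zmult_eq_1_iff by auto
    then show ?thesis using z1 by simp
  qed
  have Ml: "lam * MP p \<theta> gl = 1"
    using D_eq[OF root, of gl] unfolding Dl1 evl by simp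
  define gn where "gn = (a n, b n, c n)"
  have evn: "ev \<theta> gn = lam^n" using abc n1 unfolding gn_def by auto
  have "ev \<theta> gn = ev \<theta> (rp p q gl n)" unfolding evn ev_rp[OF root] evl ..
  then have gnr: "gn = rp p q gl n" by (rule ev_inj[OF irred root])
  have lam0: "lam > 0" using gt1 by simp
  define h where "h = lam powr (real n / 2)"
  have hpos: "h > 0" unfolding h_def using lam0 by simp
  have h2: "h^2 = lam^n"
  proof -
    have "h^2 = lam powr (real n / 2 + real n / 2)" unfolding h_def power2_eq_square powr_add by simp
    also have "\<dots> = lam powr (real n)" by simp
    also have "\<dots> = lam^n" using lam0 by (simp add: powr_realpow)
    finally show ?thesis .
  qed
  define \<rho> where "\<rho> = 1 / h"
  have rho: "\<rho> > 0" unfolding \<rho>_def using hpos by simp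
  define R where "R = ReP p \<theta> gn"
  define I where "I = ImP \<theta> gn"
  have "MP p \<theta> gn = MP p \<theta> gl ^ n" unfolding gnr M_rp[OF root] ..
  also have "\<dots> = (1 / lam)^n" using Ml lam0 by (simp add: field_simps power_mult_distrib[symmetric])
  also have "\<dots> = \<rho>^2" unfolding \<rho>_def using h2 by (simp add: power_one_over)
  finally have RI: "R^2 + s2 * I^2 = \<rho>^2" unfolding MP_def R_def I_def s2_def .
  have R0: "R \<noteq> 0"
  proof
    assume R0: "R = 0"
    have "ev \<theta> gn = ev \<theta> (3 * a n + 2 * of_int p * c n, 0, 0)"
      using R0 unfolding R_def gn_def by (simp add: of_rat_add of_rat_mult) (simp add: field_simps)
    then have "gn = (3 * a n + 2 * of_int p * c n, 0, 0)" by (rule ev_inj[OF irred root])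
    then have "a n = 0" "b n = 0" "c n = 0" unfolding gn_def by auto
    then have "lam^n = 0" using evn unfolding gn_def by simp
    then show False using lam0 by simp
  qed
  have FI: "\<bar>R - \<theta>*I\<bar> < max (sqrt 2) (sqrt 2 * \<bar>\<theta>\<bar> / sqrt s2) * \<rho> \<and>
     \<bar>R + \<theta>*I\<bar> < max (sqrt 2) (sqrt 2 * \<bar>\<theta>\<bar> / sqrt s2) * \<rho> \<and> \<bar>2*\<theta>*I\<bar> < 2*\<bar>\<theta>\<bar>/sqrt s2 * \<rho>
     \<and> 2*\<bar>\<theta>\<bar>/sqrt s2 * \<rho> \<le> sqrt 2 * max (sqrt 2) (sqrt 2 * \<bar>\<theta>\<bar> / sqrt s2) * \<rho>
     \<and> \<bar>R + 3*\<theta>*I\<bar> < (1 + sqrt 2) * max (sqrt 2) (sqrt 2 * \<bar>\<theta>\<bar> / sqrt s2) * \<rho>"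
    by (rule final_ineq[OF s2pos th0 tne rho RI R0])
  have eX: "of_rat (a n) + of_int p * of_rat (c n) - of_rat (b n) * \<theta> = R - \<theta>*I"
    unfolding R_def I_def gn_def by (simp add: field_simps power2_eq_square)
  have eY: "of_rat (a n) + of_int p * of_rat (c n) - of_rat (c n) * \<theta>^2 = R + \<theta>*I"
    unfolding R_def I_def gn_def by (simp add: field_simps power2_eq_square)
  have eZ: "of_rat (b n) * \<theta> - of_rat (c n) * \<theta>^2 = 2*\<theta>*I"
    unfolding R_def I_def gn_def by (simp add: field_simps power2_eq_square)
  have eL: "lam^n - (3 * \<theta>^2 - of_int p) * of_rat (c n) = R + 3*\<theta>*I"
    unfolding evn[symmetric] R_def I_def gn_def by (simp add: field_simps power2_eq_square)
  have dv: "x / h = x * \<rho>" for x unfolding \<rho>_def by simp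
  show "let C1 = max (sqrt 2) (sqrt 2 * \<bar>\<theta>\<bar> / sqrt (3 * \<theta>^2 - 4 * of_int p));
         X = of_rat (a n) + of_int p * of_rat (c n) - of_rat (b n) * \<theta>;
         Y = of_rat (a n) + of_int p * of_rat (c n) - of_rat (c n) * \<theta>^2;
         Z = of_rat (b n) * \<theta> - of_rat (c n) * \<theta>^2;
         h = lam powr (real n / 2)
     in \<bar>X\<bar> < C1 / h \<and> \<bar>Y\<bar> < C1 / h
        \<and> \<bar>Z\<bar> < 2 * \<bar>\<theta>\<bar> / sqrt (3 * \<theta>^2 - 4 * of_int p) * (1 / h)
        \<and> 2 * \<bar>\<theta>\<bar> / sqrt (3 * \<theta>^2 - 4 * of_int p) * (1 / h) \<le> sqrt 2 * C1 / h
        \<and> \<bar>lam^n - (3 * \<theta>^2 - of_int p) * of_rat (c n)\<bar> < (1 + sqrt 2) * C1 / h"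
    unfolding Let_def h_def[symmetric] s2_def[symmetric] eX eY eZ eL dv
    using FI unfolding \<rho>_def by simp
qed


end
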